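(* There are absolute constants $c,C>0$ such that for every integer $k\ge2$ and infinitely many $n$, there is a $k$-monotone sequence $S_k\in[n]^n$ (of length $n$) with $\mathsf{F}^{k-1}(S_k)\ge c\,\frac{n}{k}\log(n/k)$ and $\mathsf{F}^{k}(S_k)\le C\,n$.
   Context: $\log(x)=\log_2(\max\{2,x\})$. A sequence $X\in[n]^m$ is $k$-monotone if it can be partitioned into $k$ (not necessarily contiguous) subsequences that are all increasing or all decreasing. $k$-finger cost: for a static BST $T$ on $[n]$, $d_T(a,b)$ is the number of edges between $a$ and $b$ in $T$. A $k$-finger strategy is an initial vector $\vec\ell\in[n]^k$ and $\vec f\in[k]^m$, finger $f_t$ serving $x_t$, with cost $\sum_{t=1}^m(1+d_T(x_t,p_t))$ where $p_t$ is the position of finger $f_t$ before time $t$ (its last served key, or $\ell_{f_t}$). $\mathsf{F}^k_T(X)$ is the minimum such cost and $\mathsf{F}^k(X)=\min_T\mathsf{F}^k_T(X)$ over BSTs $T$ on $[n]$. *)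

theory Defs
  imports Complex_Main "HOL-Library.Tree"
begin

definition lg :: "real \<Rightarrow> real" where
  "lg x = log 2 (max 2 x)"

definition bst_on :: "nat \<Rightarrow> nat tree \<Rightarrow> bool" where
  "bst_on n T \<longleftrightarrow> inorder T = [1..<n+1]"

fun spath :: "nat tree \<Rightarrow> nat \<Rightarrow> nat list" where
  "spath Leaf x = []"
| "spath (Node l a r) x = a # (if x < a then spath l x else if a < x then spath r x else [])"

fun lcp_len :: "nat list \<Rightarrow> nat list \<Rightarrow> nat" where
  "lcp_len (a # as) (b # bs) = (if a = b then Suc (lcp_len as bs) else 0)"
| "lcp_len _ _ = 0"

text \<open>d_T(a,b): number of edges on the tree path between keys a and b,
  i.e. depth a + depth b - 2 depth(lca a b).\<close>
definition dist_T :: "nat tree \<Rightarrow> nat \<Rightarrow> nat \<Rightarrow> nat" where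
  "dist_T T a b = length (spath T a) + length (spath T b) - 2 * lcp_len (spath T a) (spath T b)"

text \<open>Cost of a finger strategy: pos i is the current position of finger i
  (initially l i, afterwards its last served key); fs lists the finger serving each access.\<close>
fun finger_cost :: "nat tree \<Rightarrow> (nat \<Rightarrow> nat) \<Rightarrow> nat list \<Rightarrow> nat list \<Rightarrow> nat" where
  "finger_cost T pos (x # xs) (j # fs) = 1 + dist_T T x (pos j) + finger_cost T (pos(j := x)) xs fs"
| "finger_cost T pos _ _ = 0"

definition finger_T :: "nat \<Rightarrow> nat \<Rightarrow> nat tree \<Rightarrow> nat list \<Rightarrow> nat" where
  "finger_T k n T X = Inf {finger_cost T l X f | l f.
      (\<forall>i<k. l i \<in> {1..n}) \<and> length f = length X \<and> set f \<subseteq> {..<k}}"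

definition finger :: "nat \<Rightarrow> nat \<Rightarrow> nat list \<Rightarrow> nat" where
  "finger k n X = Inf {finger_T k n T X | T. bst_on n T}"

definition k_monotone :: "nat \<Rightarrow> nat list \<Rightarrow> bool" where
  "k_monotone k X \<longleftrightarrow> (\<exists>c :: nat \<Rightarrow> nat. (\<forall>t<length X. c t < k) \<and>
     ((\<forall>t s. t < s \<and> s < length X \<and> c t = c s \<longrightarrow> X ! t < X ! s) \<or>
      (\<forall>t s. t < s \<and> s < length X \<and> c t = c s \<longrightarrow> X ! t > X ! s)))"

end

theory Submission
  imports Defs
begin


lemma lcp_len_sym: "lcp_len xs ys = lcp_len ys xs"
  by (induction xs ys rule: lcp_len.induct) auto

lemma lcp_len_le1: "lcp_len xs ys \<le> length xs"
  by (induction xs ys rule: lcp_len.induct) auto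

lemma lcp_len_le2: "lcp_len xs ys \<le> length ys"
  by (induction xs ys rule: lcp_len.induct) auto

lemma lcp_take: "take (lcp_len xs ys) xs = take (lcp_len xs ys) ys"
  by (induction xs ys rule: lcp_len.induct) auto

lemma lcp_append: "lcp_len xs (xs @ ys) = length xs"
  by (induction xs) auto

lemma dist_sym: "dist_T T a b = dist_T T b a"
  unfolding dist_T_def by (simp add: lcp_len_sym)

lemma spath_ne: "u \<in> set_tree T \<Longrightarrow> spath T u \<noteq> []"
  by (cases T) auto

lemma spath_l: "bst (Node l a r) \<Longrightarrow> u \<in> set_tree l \<Longrightarrow> spath (Node l a r) u = a # spath l u"
  by auto

lemma spath_r: "bst (Node l a r) \<Longrightarrow> u \<in> set_tree r \<Longrightarrow> spath (Node l a r) u = a # spath r u"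
  by auto

lemma hd_spath: "u \<in> set_tree (Node l b r) \<Longrightarrow> hd (spath (Node l b r) u) = b"
  by simp

lemma between:
  "bst T \<Longrightarrow> a \<in> set_tree T \<Longrightarrow> b \<in> set_tree T \<Longrightarrow> u \<in> set_tree T \<Longrightarrow> a \<le> u \<Longrightarrow> u \<le> b \<Longrightarrow>
   take (lcp_len (spath T a) (spath T b)) (spath T u) = take (lcp_len (spath T a) (spath T b)) (spath T a)"
proof (induction T)
  case Leaf
  then show ?case by simp
next
  case (Node l c r)
  show ?case
  proof (cases "b < c")
    case True
    then have "a < c" "u < c" using Node by auto
    then have "a \<in> set_tree l" "b \<in> set_tree l" "u \<in> set_tree l" using Node True by auto
    then show ?thesis using Node True \<open>a < c\<close> \<open>u < c\<close> by auto
  next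
    case False
    show ?thesis
    proof (cases "c < a")
      case True
      then have "c < b" "c < u" using Node by auto
      then have "a \<in> set_tree r" "b \<in> set_tree r" "u \<in> set_tree r" using Node True by auto
      then show ?thesis using Node True \<open>c < b\<close> \<open>c < u\<close> by auto
    next
      case False2: False
      have "lcp_len (spath (Node l c r) a) (spath (Node l c r) b) \<le> 1"
      proof -
        have A: "spath (Node l c r) a = c # (if a < c then spath l a else [])" using False2 by auto
        have B: "spath (Node l c r) b = c # (if c < b then spath r b else [])" using False by auto
        have "lcp_len (if a < c then spath l a else []) (if c < b then spath r b else []) = 0"
        proof (cases "a < c \<and> c < b")
          case True
          then have "a \<in> set_tree l" "b \<in> set_tree r" using Node by auto
          then obtain l1 x l2 r1 y r2 where "l = Node l1 x l2" "r = Node r1 y r2"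
            by (cases l; cases r) auto
          moreover have "x < c" "c < y" using Node.prems(1) calculation by auto
          ultimately show ?thesis using True by (simp)
        next
          case False
          then show ?thesis by (cases "spath l a"; cases "spath r b") auto
        qed
        then show ?thesis using A B by simp
      qed
      then consider "lcp_len (spath (Node l c r) a) (spath (Node l c r) b) = 0" |
         "lcp_len (spath (Node l c r) a) (spath (Node l c r) b) = 1" by linarith
      then show ?thesis
      proof cases
        case 1 then show ?thesis by simp
      next
        case 2
        have "u \<noteq> c \<Longrightarrow> u < c \<or> c < u" by auto
        then show ?thesis using 2 by auto
      qed
    qed
  qed
qed



lemma depth_count:
  "bst T \<Longrightarrow> card {u \<in> set_tree T. length (spath T u) \<le> D} < 2^D"
proof (induction T arbitrary: D)
  case Leaf
  then show ?case by simp
next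
  case (Node l a r)
  show ?case
  proof (cases D)
    case 0
    then show ?thesis using spath_ne[of _ "Node l a r"] by auto
  next
    case (Suc D')
    let ?L = "{u \<in> set_tree l. length (spath l u) \<le> D'}"
    let ?R = "{u \<in> set_tree r. length (spath r u) \<le> D'}"
    have sub: "{u \<in> set_tree (Node l a r). length (spath (Node l a r) u) \<le> D} \<subseteq> insert a (?L \<union> ?R)"
      using Node.prems Suc by auto
    have "card (insert a (?L \<union> ?R)) \<le> Suc (card (?L \<union> ?R))"
      by (simp add: card_insert_if)
    then have "card (insert a (?L \<union> ?R)) \<le> Suc (card ?L + card ?R)"
      using card_Un_le[of ?L ?R] by linarith
    moreover have "card ?L < 2^D'" "card ?R < 2^D'" using Node by auto
    moreover have "finite (insert a (?L \<union> ?R))" by simp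
    ultimately show ?thesis using card_mono[OF _ sub] Suc by auto
  qed
qed

lemma count0:
  "bst T \<Longrightarrow> length P = L \<Longrightarrow>
   card {u \<in> set_tree T. take L (spath T u) = P \<and> length (spath T u) \<le> L + D} < 2^(Suc D)"
proof (induction T arbitrary: L P)
  case Leaf
  then show ?case by simp
next
  case (Node l a r)
  let ?S = "{u \<in> set_tree (Node l a r). take L (spath (Node l a r) u) = P \<and> length (spath (Node l a r) u) \<le> L + D}"
  show ?case
  proof (cases L)
    case 0
    have "?S \<subseteq> {u \<in> set_tree (Node l a r). length (spath (Node l a r) u) \<le> Suc D}" using 0 by auto
    moreover have "card {u \<in> set_tree (Node l a r). length (spath (Node l a r) u) \<le> Suc D} < 2^Suc D"
      using depth_count Node.prems by blast
    ultimately show ?thesis using card_mono[of "{u \<in> set_tree (Node l a r). length (spath (Node l a r) u) \<le> Suc D}" ?S] by fastforce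
  next
    case (Suc L')
    show ?thesis
    proof (cases L')
      case 0
      have "?S \<subseteq> {u \<in> set_tree (Node l a r). length (spath (Node l a r) u) \<le> Suc D}" using 0 Suc by auto
      moreover have "card {u \<in> set_tree (Node l a r). length (spath (Node l a r) u) \<le> Suc D} < 2^Suc D"
        using depth_count Node.prems by blast
      ultimately show ?thesis using card_mono[of "{u \<in> set_tree (Node l a r). length (spath (Node l a r) u) \<le> Suc D}" ?S] by fastforce
    next
      case (Suc L'')
      obtain p q P'' where P: "P = p # q # P''" using Node.prems(2) \<open>L = Suc L'\<close> Suc
        by (cases P; cases "tl P") auto
      let ?L = "{u \<in> set_tree l. take L' (spath l u) = q # P'' \<and> length (spath l u) \<le> L' + D}"
      let ?R = "{u \<in> set_tree r. take L' (spath r u) = q # P'' \<and> length (spath r u) \<le> L' + D}"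
      have sub: "?S \<subseteq> ?L \<union> ?R"
      proof
        fix u assume u: "u \<in> ?S"
        then have "u \<noteq> a" using P Suc \<open>L = Suc L'\<close> by auto
        have tk0: "take L (spath (Node l a r) u) = P" using u by blast
        have tk: "take (Suc L') (spath (Node l a r) u) = p # q # P''" using tk0 P \<open>L = Suc L'\<close> by metis
        have ln0: "length (spath (Node l a r) u) \<le> L + D" using u by blast
        have ln: "length (spath (Node l a r) u) \<le> Suc L' + D" using ln0 \<open>L = Suc L'\<close> by metis
        consider "u < a" | "a < u" using \<open>u \<noteq> a\<close> by linarith
        then show "u \<in> ?L \<union> ?R"
        proof cases
          case 1
          then have "u \<in> set_tree l" using u Node.prems(1) by auto
          moreover have sp: "spath (Node l a r) u = a # spath l u" using 1 by simp
          ultimately show ?thesis using tk ln unfolding sp by simp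
        next
          case 2
          then have "u \<in> set_tree r" using u Node.prems(1) by auto
          moreover have sp: "spath (Node l a r) u = a # spath r u" using 2 by simp
          ultimately show ?thesis using tk ln unfolding sp by simp
        qed
      qed
      have E: "?L = {} \<or> ?R = {}"
      proof (rule ccontr)
        assume "\<not> (?L = {} \<or> ?R = {})"
        then obtain u v where u: "u \<in> ?L" and v: "v \<in> ?R" by blast
        obtain l1 x l2 where l: "l = Node l1 x l2" using u by (cases l) auto
        obtain r1 y r2 where r: "r = Node r1 y r2" using v by (cases r) auto
        have "take L' (spath l u) = q # P''" using u by simp
        then have "x = q" using l Suc by simp
        moreover have "take L' (spath r v) = q # P''" using v by simp
        then have "y = q" using r Suc by simp
        moreover have "x < a" "a < y" using Node.prems(1) l r by auto
        ultimately show False by simp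
      qed
      have lq: "length (q # P'') = L'" using Node.prems(2) P \<open>L = Suc L'\<close> by simp
      have cL: "card ?L < 2^Suc D" and cR: "card ?R < 2^Suc D"
        using Node.IH(1)[OF _ lq] Node.IH(2)[OF _ lq] Node.prems(1) by auto
      have "card (?L \<union> ?R) < 2^Suc D" using E cL cR by (elim disjE) (simp only: Un_empty_left Un_empty_right)+
      moreover have "card ?S \<le> card (?L \<union> ?R)" by (rule card_mono[OF _ sub]) simp
      ultimately show ?thesis by linarith
    qed
  qed
qed



lemma count_pairs:
  fixes x y :: "nat \<Rightarrow> nat"
  assumes bst: "bst T" and fin: "finite I"
    and mem: "\<And>t. t \<in> I \<Longrightarrow> x t \<in> set_tree T \<and> y t \<in> set_tree T"
    and mono: "\<And>s t. s \<in> I \<Longrightarrow> t \<in> I \<Longrightarrow> s < t \<Longrightarrow> x s < x t \<and> y s < y t"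
    and sep: "\<And>s t. s \<in> I \<Longrightarrow> t \<in> I \<Longrightarrow> x s < y t"
    and cheap: "\<And>t. t \<in> I \<Longrightarrow> dist_T T (x t) (y t) \<le> D"
  shows "card I < 2^(Suc D)"
proof (cases "I = {}")
  case True
  then show ?thesis by simp
next
  case False
  define Lf where "Lf t = lcp_len (spath T (x t)) (spath T (y t))" for t
  have "Max (Lf ` I) \<in> Lf ` I" using fin False by simp
  then obtain t0 where t0a: "t0 \<in> I" and t0b: "Lf t0 = Max (Lf ` I)" by auto
  have t0: "t0 \<in> I" "\<And>t. t \<in> I \<Longrightarrow> Lf t \<le> Lf t0"
    using t0a apply simp
    using t0b fin by simp
  define L where "L = Lf t0"
  define P where "P = take L (spath T (x t0))"
  have lenP: "length P = L"
    unfolding P_def L_def Lf_def using lcp_len_le1[of "spath T (x t0)" "spath T (y t0)"] by simp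
  define u where "u t = (if t < t0 then y t else x t)" for t
  have inj: "inj_on u I"
  proof (rule inj_onI)
    fix s t assume s: "s \<in> I" and t: "t \<in> I" and eq: "u s = u t"
    show "s = t"
    proof (rule ccontr)
      assume "s \<noteq> t"
      then consider "s < t" | "t < s" by linarith
      then show False
      proof cases
        case 1
        have a: "x s < x t" "y s < y t" using mono[OF s t 1] by auto
        have b: "x s < y t" "x t < y s" using sep[OF s t] sep[OF t s] by auto
        show False
        proof (cases "t < t0")
          case True
          then show False using 1 a b eq unfolding u_def by simp
        next
          case False
          then show False using 1 a b eq unfolding u_def by (cases "s < t0") simp_all
        qed
      next
        case 2
        have a: "x t < x s" "y t < y s" using mono[OF t s 2] by auto
        have b: "x s < y t" "x t < y s" using sep[OF s t] sep[OF t s] by auto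
        show False
        proof (cases "s < t0")
          case True
          then show False using 2 a b eq unfolding u_def by simp
        next
          case False
          then show False using 2 a b eq unfolding u_def by (cases "t < t0") simp_all
        qed
      qed
    qed
  qed
  let ?U = "{v \<in> set_tree T. take L (spath T v) = P \<and> length (spath T v) \<le> L + D}"
  have sub: "u ` I \<subseteq> ?U"
  proof
    fix v assume "v \<in> u ` I"
    then obtain t where t: "t \<in> I" and v: "v = u t" by blast
    have d: "length (spath T (x t)) + length (spath T (y t)) - 2 * Lf t \<le> D"
      using cheap[OF t] unfolding dist_T_def Lf_def .
    have l1: "Lf t \<le> length (spath T (x t))" "Lf t \<le> length (spath T (y t))"
      unfolding Lf_def using lcp_len_le1 lcp_len_le2 by auto
    have le: "Lf t \<le> L" using t0(2)[OF t] unfolding L_def .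
    have vm: "v \<in> set_tree T" using mem[OF t] v unfolding u_def by auto
    have lo: "x t0 \<le> v" and hi: "v \<le> y t0"
    proof -
      show "x t0 \<le> v"
      proof (cases "t < t0")
        case True
        then show ?thesis using sep[OF t0(1) t] v unfolding u_def by simp
      next
        case False
        then have "t0 = t \<or> t0 < t" by linarith
        then show ?thesis using mono[OF t0(1) t] v unfolding u_def using False by auto
      qed
      show "v \<le> y t0"
      proof (cases "t < t0")
        case True
        then show ?thesis using mono[OF t t0(1)] v unfolding u_def by simp
      next
        case False
        then show ?thesis using sep[OF t t0(1)] v unfolding u_def by simp
      qed
    qed
    have "take L (spath T v) = P"
      using between[OF bst mem[OF t0(1), THEN conjunct1] mem[OF t0(1), THEN conjunct2] vm lo hi]
      unfolding P_def L_def Lf_def by simp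
    moreover have "length (spath T v) \<le> L + D"
      using d l1 le v unfolding u_def by (auto split: if_splits)
    ultimately show "v \<in> ?U" using vm by blast
  qed
  have "card I = card (u ` I)" using inj by (simp add: card_image)
  also have "\<dots> \<le> card ?U" by (rule card_mono[OF _ sub]) simp
  also have "\<dots> < 2^(Suc D)" using count0[OF bst lenP] .
  finally show ?thesis .
qed



fun posAt :: "(nat \<Rightarrow> nat) \<Rightarrow> nat list \<Rightarrow> nat list \<Rightarrow> nat \<Rightarrow> (nat \<Rightarrow> nat)" where
  "posAt pos xs fs 0 = pos"
| "posAt pos (x # xs) (j # fs) (Suc i) = posAt (pos(j := x)) xs fs i"
| "posAt pos _ _ (Suc i) = pos"

lemma cost_sum:
  "length fs = length xs \<Longrightarrow>
   finger_cost T pos xs fs = (\<Sum>i<length xs. 1 + dist_T T (xs ! i) (posAt pos xs fs i (fs ! i)))"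
proof (induction xs arbitrary: pos fs)
  case Nil
  then show ?case by simp
next
  case (Cons x xs)
  then obtain j fs' where fs: "fs = j # fs'" "length fs' = length xs" by (cases fs) auto
  have e1: "finger_cost T pos (x#xs) (j#fs') = 1 + dist_T T x (pos j) + finger_cost T (pos(j:=x)) xs fs'"
    by simp
  have e2: "finger_cost T (pos(j:=x)) xs fs' = (\<Sum>i<length xs. 1 + dist_T T (xs!i) (posAt (pos(j:=x)) xs fs' i (fs'!i)))"
    by (rule Cons.IH[OF fs(2)])
  have e3: "(\<Sum>i<length (x#xs). 1 + dist_T T ((x#xs)!i) (posAt pos (x#xs) (j#fs') i ((j#fs')!i)))
     = (1 + dist_T T x (pos j)) + (\<Sum>i<length xs. 1 + dist_T T (xs!i) (posAt (pos(j:=x)) xs fs' i (fs'!i)))"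
    by (simp only: length_Cons sum.lessThan_Suc_shift nth_Cons_0 nth_Cons_Suc posAt.simps)
  show ?case unfolding fs(1) e1 e2 e3 by (rule refl)
qed

lemma posAt_noupd:
  "length fs = length xs \<Longrightarrow> (\<forall>i'<i. fs ! i' \<noteq> j) \<Longrightarrow> posAt pos xs fs i j = pos j"
proof (induction xs arbitrary: pos fs i)
  case Nil
  then show ?case by (cases i) auto
next
  case (Cons x xs)
  then obtain j' fs' where fs: "fs = j' # fs'" "length fs' = length xs" by (cases fs) auto
  show ?case
  proof (cases i)
    case 0
    then show ?thesis by simp
  next
    case (Suc i1)
    have "j' \<noteq> j" using Cons.prems(2) Suc fs by auto
    moreover have "\<forall>i'<i1. fs' ! i' \<noteq> j" using Cons.prems(2) Suc fs by auto
    ultimately show ?thesis using Cons.IH[OF fs(2)] Suc fs by simp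
  qed
qed

lemma posAt_last:
  "length fs = length xs \<Longrightarrow> i0 < i \<Longrightarrow> fs ! i0 = j \<Longrightarrow>
   (\<forall>i'. i0 < i' \<and> i' < i \<longrightarrow> fs ! i' \<noteq> j) \<Longrightarrow> i0 < length xs \<Longrightarrow>
   posAt pos xs fs i j = xs ! i0"
proof (induction xs arbitrary: pos fs i i0)
  case Nil
  then show ?case by simp
next
  case (Cons x xs)
  then obtain j' fs' where fs: "fs = j' # fs'" "length fs' = length xs" by (cases fs) auto
  obtain i1 where i: "i = Suc i1" using Cons.prems(2) by (cases i) auto
  show ?case
  proof (cases i0)
    case 0
    then have "j' = j" using Cons.prems(3) fs by simp
    have "\<forall>i'<i1. fs' ! i' \<noteq> j" using Cons.prems(4) i fs 0 by force
    then have "posAt (pos(j' := x)) xs fs' i1 j = x"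
      using posAt_noupd[OF fs(2)] \<open>j' = j\<close> by simp
    then show ?thesis using i fs 0 by simp
  next
    case (Suc i0')
    have "posAt (pos(j' := x)) xs fs' i1 j = xs ! i0'"
    proof (rule Cons.IH[OF fs(2)])
      show "i0' < i1" using Cons.prems(2) i Suc by simp
      show "fs' ! i0' = j" using Cons.prems(3) fs Suc by simp
      show "\<forall>i'. i0' < i' \<and> i' < i1 \<longrightarrow> fs' ! i' \<noteq> j"
      proof (intro allI impI)
        fix i' assume "i0' < i' \<and> i' < i1"
        then have "i0 < Suc i' \<and> Suc i' < i" using Suc i by simp
        then have "fs ! Suc i' \<noteq> j" using Cons.prems(4) by blast
        then show "fs' ! i' \<noteq> j" using fs by simp
      qed
      show "i0' < length xs" using Cons.prems(5) Suc by simp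
    qed
    then show ?thesis using i fs Suc by simp
  qed
qed

lemma pigeon_round:
  fixes g :: "nat \<Rightarrow> nat"
  assumes "\<And>j. j < k \<Longrightarrow> g j < k - 1" "k \<ge> 1"
  shows "\<exists>j1 j2. j1 < j2 \<and> j2 < k \<and> g j1 = g j2 \<and> (\<forall>j'. j1 < j' \<and> j' < j2 \<longrightarrow> g j' \<noteq> g j2)"
proof -
  have "\<not> inj_on g {..<k}"
  proof
    assume "inj_on g {..<k}"
    then have "card (g ` {..<k}) = k" by (simp add: card_image)
    moreover have "g ` {..<k} \<subseteq> {..<k-1}" using assms(1) by auto
    then have "card (g ` {..<k}) \<le> k - 1" using card_mono[of "{..<k-1}"] by fastforce
    ultimately show False using assms(2) by linarith
  qed
  then obtain a b where ab: "a < k" "b < k" "a \<noteq> b" "g a = g b" unfolding inj_on_def by auto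
  define lo where "lo = min a b"
  define hi where "hi = max a b"
  have lh: "lo < hi" "hi < k" "g lo = g hi" using ab unfolding lo_def hi_def by (auto simp: min_def max_def)
  define A where "A = {j. j < hi \<and> g j = g hi}"
  have finA: "finite A" unfolding A_def by simp
  have "lo \<in> A" using lh unfolding A_def by simp
  then have neA: "A \<noteq> {}" by auto
  define j1 where "j1 = Max A"
  have j1A: "j1 \<in> A" unfolding j1_def using finA neA by simp
  have "\<forall>j'. j1 < j' \<and> j' < hi \<longrightarrow> g j' \<noteq> g hi"
  proof (intro allI impI)
    fix j' assume j': "j1 < j' \<and> j' < hi"
    show "g j' \<noteq> g hi"
    proof
      assume "g j' = g hi"
      then have "j' \<in> A" using j' unfolding A_def by simp
      then have "j' \<le> j1" unfolding j1_def using Max_ge[OF finA] by simp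
      then show False using j' by simp
    qed
  qed
  then show ?thesis using j1A lh unfolding A_def by blast
qed



definition seqS :: "nat \<Rightarrow> nat \<Rightarrow> nat list" where
  "seqS k m = map (\<lambda>i. (i mod k) * m + i div k + 1) [0..<k*m]"

lemma seqS_len[simp]: "length (seqS k m) = k * m"
  unfolding seqS_def by simp

lemma seqS_nth: "i < k * m \<Longrightarrow> seqS k m ! i = (i mod k) * m + i div k + 1"
  unfolding seqS_def by simp

lemma seqS_idx: "j < k \<Longrightarrow> t < m \<Longrightarrow> seqS k m ! (t * k + j) = j * m + t + 1"
proof -
  assume a: "j < k" "t < m"
  have "t * k + j < k * m"
  proof -
    have "t * k + j < t * k + k" using a by simp
    also have "\<dots> = (t + 1) * k" by simp
    also have "\<dots> \<le> m * k" using a by (intro mult_right_mono) auto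
    finally show ?thesis by (simp add: mult.commute)
  qed
  moreover have "(t * k + j) mod k = j" using a by simp
  moreover have "(t * k + j) div k = t" using a by simp
  ultimately show ?thesis by (simp add: seqS_nth)
qed

lemma seqS_range: "i < k * m \<Longrightarrow> seqS k m ! i \<in> {1..k*m}"
proof -
  assume a: "i < k * m"
  then have k: "k > 0" by (cases k) auto
  have "i mod k \<le> k - 1" using k by (simp add: less_Suc_eq_le[symmetric])
  moreover have "i div k < m" using a k by (simp add: div_less_iff_less_mult mult.commute)
  ultimately have "(i mod k) * m + (i div k + 1) \<le> (k - 1) * m + m"
    by (intro add_le_mono mult_le_mono1) auto
  also have "\<dots> = k * m" using k by (cases k) auto
  finally show ?thesis using a by (simp add: seqS_nth)
qed

lemma upt_split3: "a \<le> b \<Longrightarrow> b \<le> c \<Longrightarrow> [a..<c] = [a..<b] @ [b..<c]"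
  using upt_add_eq_append[of a b "c - b"] by simp

lemma bst_on_facts: "bst_on n T \<Longrightarrow> bst T \<and> set_tree T = {1..n}"
  unfolding bst_on_def
  by (metis atLeastLessThanSuc_atLeastAtMost bst_iff_sorted_wrt_less set_inorder set_upt sorted_wrt_upt Suc_eq_plus1)

fun rchain :: "nat \<Rightarrow> nat \<Rightarrow> nat tree" where
  "rchain a 0 = Leaf"
| "rchain a (Suc c) = Node Leaf a (rchain (Suc a) c)"

lemma inorder_rchain: "inorder (rchain a c) = [a..<a+c]"
  by (induction c arbitrary: a) (auto simp: upt_conv_Cons)

lemma set_rchain: "set_tree (rchain a c) = {a..<a+c}"
  by (metis inorder_rchain set_inorder set_upt)

lemma spath_rchain: "a \<le> x \<Longrightarrow> x < a + c \<Longrightarrow> spath (rchain a c) x = [a..<Suc x]"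
proof (induction c arbitrary: a)
  case 0
  then show ?case by simp
next
  case (Suc c)
  show ?case
  proof (cases "x = a")
    case True
    then show ?thesis by simp
  next
    case False
    then have "Suc a \<le> x" using Suc.prems by simp
    then have "spath (rchain (Suc a) c) x = [Suc a..<Suc x]" using Suc by simp
    then show ?thesis using False Suc.prems by (simp add: upt_conv_Cons)
  qed
qed

lemma dist_rchain: "a \<le> x \<Longrightarrow> x \<le> y \<Longrightarrow> y < a + c \<Longrightarrow> dist_T (rchain a c) x y = y - x"
proof -
  assume a: "a \<le> x" "x \<le> y" "y < a + c"
  have px: "spath (rchain a c) x = [a..<Suc x]" using a by (simp add: spath_rchain)
  have "spath (rchain a c) y = [a..<Suc y]" using a by (intro spath_rchain) auto
  also have "[a..<Suc y] = [a..<Suc x] @ [Suc x..<Suc y]" using a by (intro upt_split3) auto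
  finally have py: "spath (rchain a c) y = [a..<Suc x] @ [Suc x..<Suc y]" .
  have L: "lcp_len [a..<Suc x] ([a..<Suc x] @ [Suc x..<Suc y]) = Suc x - a" using lcp_append[of "[a..<Suc x]" "[Suc x..<Suc y]"] by (simp only: length_upt)
  show ?thesis unfolding dist_T_def px py L length_append length_upt using a by arith
qed

lemma upper:
  assumes k: "k \<ge> 1" and m: "m \<ge> 1"
  shows "finger k (k * m) (seqS k m) \<le> 2 * (k * m)"
proof -
  define n where "n = k * m"
  define T0 where "T0 = rchain 1 n"
  define S where "S = seqS k m"
  define l where "l = (\<lambda>j::nat. j * m + 1)"
  define f where "f = map (\<lambda>i. i mod k) [0..<n]"
  have bst0: "bst_on n T0" unfolding bst_on_def T0_def by (simp add: inorder_rchain)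
  have lenf: "length f = length S" unfolding f_def S_def n_def by simp
  have lenS: "length S = n" unfolding S_def n_def by simp
  have fn: "\<And>i. i < n \<Longrightarrow> f ! i = i mod k" unfolding f_def by simp
  have Sr: "\<And>i. i < n \<Longrightarrow> S ! i \<in> {1..n}" unfolding S_def n_def using seqS_range by blast
  have trm: "1 + dist_T T0 (S ! i) (posAt l S f i (f ! i)) \<le> 2" if i: "i < n" for i
  proof (cases "i < k")
    case True
    have "posAt l S f i (f ! i) = l (f ! i)"
    proof (rule posAt_noupd[OF lenf], intro allI impI)
      fix i' assume "i' < i"
      then have "f ! i' = i'" using fn[of i'] i True by simp
      moreover have "f ! i = i" using fn[OF i] True by simp
      ultimately show "f ! i' \<noteq> f ! i" using \<open>i' < i\<close> by simp
    qed
    also have "\<dots> = S ! i"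
    proof -
      have "f ! i = i" using fn[OF i] True by simp
      moreover have "S ! i = i * m + 1" using True i unfolding S_def n_def by (simp add: seqS_nth)
      ultimately show ?thesis unfolding l_def by simp
    qed
    finally have "dist_T T0 (S ! i) (posAt l S f i (f ! i)) = 0"
      using Sr[OF i] unfolding T0_def by (simp add: dist_rchain)
    then show ?thesis by simp
  next
    case False
    have km: "(i - k) mod k = i mod k" using False by (simp add: le_mod_geq)
    have "posAt l S f i (f ! i) = S ! (i - k)"
    proof (rule posAt_last[OF lenf])
      show "i - k < i" using False k by simp
      show "f ! (i - k) = f ! i" using fn i km by simp
      show "\<forall>i'. i - k < i' \<and> i' < i \<longrightarrow> f ! i' \<noteq> f ! i"
      proof (intro allI impI)
        fix i' assume i': "i - k < i' \<and> i' < i"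
        show "f ! i' \<noteq> f ! i"
        proof
          assume "f ! i' = f ! i"
          then have "i' mod k = i mod k" using fn i i' by simp
          then have "k dvd (i - i')" using i' mod_eq_dvd_iff_nat[of i' i k] by simp
          moreover have "0 < i - i'" "i - i' < k" using i' by auto
          ultimately show False using dvd_imp_le by fastforce
        qed
      qed
      show "i - k < length S" using i lenS by simp
    qed
    moreover have "S ! (i - k) + 1 = S ! i"
    proof -
      have "i div k = Suc ((i - k) div k)" using False k by (simp add: le_div_geq)
      then show ?thesis unfolding S_def using i km n_def by (simp add: seqS_nth)
    qed
    ultimately have "dist_T T0 (S ! i) (posAt l S f i (f ! i)) = 1"
    proof -
      assume p: "posAt l S f i (f ! i) = S ! (i - k)" and e: "S ! (i - k) + 1 = S ! i"
      have r1: "S ! (i - k) \<in> {1..n}" using Sr[of "i - k"] i by simp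
      have r2: "S ! i \<in> {1..n}" using Sr[OF i] .
      have "dist_T T0 (S ! (i - k)) (S ! i) = S ! i - S ! (i - k)"
        unfolding T0_def by (rule dist_rchain) (use r1 r2 e in auto)
      then show ?thesis using p e dist_sym by simp
    qed
    then show ?thesis by simp
  qed
  have "finger_cost T0 l S f = (\<Sum>i<n. 1 + dist_T T0 (S ! i) (posAt l S f i (f ! i)))"
    using cost_sum[OF lenf] lenS by simp
  also have "\<dots> \<le> (\<Sum>i<n. 2)" by (rule sum_mono) (rule trm, simp)
  finally have c: "finger_cost T0 l S f \<le> 2 * n" by simp
  have mem: "finger_cost T0 l S f \<in> {finger_cost T0 l S f | l f.
      (\<forall>i<k. l i \<in> {1..n}) \<and> length f = length S \<and> set f \<subseteq> {..<k}}"
  proof -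
    have "\<forall>i<k. l i \<in> {1..n}"
    proof (intro allI impI)
      fix i assume "i < k"
      then have "i * m + 1 \<le> (k - 1) * m + m" using m
        by (intro add_le_mono mult_le_mono1) auto
      also have "\<dots> = n" unfolding n_def using k by (cases k) auto
      finally show "l i \<in> {1..n}" unfolding l_def by simp
    qed
    moreover have "set f \<subseteq> {..<k}" unfolding f_def using k by auto
    ultimately show ?thesis using lenf by blast
  qed
  have "finger_T k n T0 S \<le> finger_cost T0 l S f"
    unfolding finger_T_def by (rule cInf_lower[OF mem]) simp
  moreover have "finger k n S \<le> finger_T k n T0 S"
    unfolding finger_def by (rule cInf_lower) (use bst0 in auto)
  ultimately show ?thesis using c unfolding n_def S_def by simp
qed



lemma idx_bound: "j < k \<Longrightarrow> t < m \<Longrightarrow> t * k + j < k * (m::nat)"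
proof -
  assume a: "j < k" "t < m"
  have "t * k + j < t * k + k" using a by simp
  also have "\<dots> = (t + 1) * k" by simp
  also have "\<dots> \<le> m * k" using a by (intro mult_right_mono) auto
  finally show ?thesis by (simp add: mult.commute)
qed

lemma sep_bound: "a < b \<Longrightarrow> s < (m::nat) \<Longrightarrow> a * m + s + 1 < b * m + t + 1"
proof -
  assume a: "a < b" "s < m"
  have "a * m + s < a * m + m" using a by simp
  also have "\<dots> = (a + 1) * m" by simp
  also have "\<dots> \<le> b * m" using a by (intro mult_right_mono) auto
  finally show ?thesis by simp
qed

lemma lower_cost:
  assumes k: "k \<ge> 2" and q: "q \<ge> 1" and mdef: "m = k^2 * 4^q" and T: "bst_on (k*m) T"
    and lf: "length f = k*m" and sf: "set f \<subseteq> {..<k-1}"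
  shows "2*(k*m) + q*m \<le> 2 * finger_cost T l (seqS k m) f"
proof -
  define n where "n = k * m"
  define S where "S = seqS k m"
  have bstT: "bst T" and setT: "set_tree T = {1..n}" using bst_on_facts[OF T] unfolding n_def by auto
  have lenS: "length S = n" unfolding S_def n_def by simp
  have lenf: "length f = length S" using lf lenS n_def by simp
  define d where "d i = dist_T T (S ! i) (posAt l S f i (f ! i))" for i
  have "finger_cost T l S f = (\<Sum>i<n. 1 + d i)"
    using cost_sum[OF lenf] lenS unfolding d_def by simp
  also have "\<dots> = (\<Sum>i<n. 1) + (\<Sum>i<n. d i)" by (rule sum.distrib)
  finally have cost: "finger_cost T l S f = n + (\<Sum>i<n. d i)" by simp
  have fk: "f ! i < k - 1" if "i < n" for i
  proof -
    have "f ! i \<in> set f" using that lf n_def by simp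
    then show ?thesis using sf by auto
  qed
  have ex: "\<forall>t. \<exists>p. t < m \<longrightarrow> (fst p < snd p \<and> snd p < k \<and> f ! (t*k + fst p) = f ! (t*k + snd p) \<and>
      (\<forall>j'. fst p < j' \<and> j' < snd p \<longrightarrow> f ! (t*k + j') \<noteq> f ! (t*k + snd p)))"
  proof
    fix t
    show "\<exists>p. t < m \<longrightarrow> (fst p < snd p \<and> snd p < k \<and> f ! (t*k + fst p) = f ! (t*k + snd p) \<and>
      (\<forall>j'. fst p < j' \<and> j' < snd p \<longrightarrow> f ! (t*k + j') \<noteq> f ! (t*k + snd p)))"
    proof (cases "t < m")
      case True
      have "\<exists>j1 j2. j1 < j2 \<and> j2 < k \<and> f ! (t*k + j1) = f ! (t*k + j2) \<and>
          (\<forall>j'. j1 < j' \<and> j' < j2 \<longrightarrow> f ! (t*k + j') \<noteq> f ! (t*k + j2))"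
        by (rule pigeon_round[where g = "\<lambda>j. f ! (t*k + j)"]) (use fk idx_bound True k n_def in auto)
      then show ?thesis by (metis fst_conv snd_conv)
    next
      case False
      then show ?thesis by simp
    qed
  qed
  then obtain J where J: "\<And>t. t < m \<Longrightarrow> fst (J t) < snd (J t) \<and> snd (J t) < k \<and>
      f ! (t*k + fst (J t)) = f ! (t*k + snd (J t)) \<and>
      (\<forall>j'. fst (J t) < j' \<and> j' < snd (J t) \<longrightarrow> f ! (t*k + j') \<noteq> f ! (t*k + snd (J t)))"
    by (metis choice)
  define J1 where "J1 t = fst (J t)" for t
  define J2 where "J2 t = snd (J t)" for t
  define \<delta> where "\<delta> t = dist_T T (J1 t * m + t + 1) (J2 t * m + t + 1)" for t
  have dd: "d (t*k + J2 t) = \<delta> t" if t: "t < m" for t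
  proof -
    have j: "J1 t < J2 t" "J2 t < k" using J[OF t] unfolding J1_def J2_def by auto
    have "posAt l S f (t*k + J2 t) (f ! (t*k + J2 t)) = S ! (t*k + J1 t)"
    proof (rule posAt_last[OF lenf])
      show "t * k + J1 t < t * k + J2 t" using j by simp
      show "f ! (t * k + J1 t) = f ! (t * k + J2 t)" using J[OF t] unfolding J1_def J2_def by simp
      show "\<forall>i'. t * k + J1 t < i' \<and> i' < t * k + J2 t \<longrightarrow> f ! i' \<noteq> f ! (t * k + J2 t)"
      proof (intro allI impI)
        fix i' assume i': "t * k + J1 t < i' \<and> i' < t * k + J2 t"
        define j' where "j' = i' - t * k"
        have "i' = t * k + j'" "J1 t < j'" "j' < J2 t" using i' unfolding j'_def by auto
        then show "f ! i' \<noteq> f ! (t * k + J2 t)" using J[OF t] unfolding J1_def J2_def by auto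
      qed
      show "t * k + J1 t < length S" using idx_bound[of "J1 t" k t m] j t lenS n_def by simp
    qed
    then show ?thesis unfolding d_def \<delta>_def S_def
      using seqS_idx[of "J1 t" k t m] seqS_idx[of "J2 t" k t m] j t dist_sym by simp
  qed
  define idx where "idx t = t * k + J2 t" for t
  have idx_inj: "inj_on idx {..<m}"
  proof (rule inj_onI)
    fix s t assume s: "s \<in> {..<m}" and t: "t \<in> {..<m}" and e: "idx s = idx t"
    have "J2 s < k" using J[of s] s unfolding J2_def by simp
    moreover have "J2 t < k" using J[of t] t unfolding J2_def by simp
    ultimately have d1: "idx s div k = s" and d2: "idx t div k = t" unfolding idx_def by auto
    show "s = t" using e d1 d2 by metis
  qed
  have idx_sub: "idx ` {..<m} \<subseteq> {..<n}"
  proof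
    fix i assume "i \<in> idx ` {..<m}"
    then obtain t where t: "t < m" and i: "i = idx t" by blast
    have "J2 t < k" using J[of t] t unfolding J2_def by simp
    then show "i \<in> {..<n}" using idx_bound[of "J2 t" k t m] t i unfolding idx_def n_def by simp
  qed
  have sum1: "(\<Sum>t<m. \<delta> t) \<le> (\<Sum>i<n. d i)"
  proof -
    have "(\<Sum>t<m. \<delta> t) = (\<Sum>t<m. d (idx t))" using dd unfolding idx_def by simp
    also have "\<dots> = (\<Sum>i\<in>idx ` {..<m}. d i)" using sum.reindex[OF idx_inj, of d] by simp
    also have "\<dots> \<le> (\<Sum>i<n. d i)" by (rule sum_mono2[OF _ idx_sub]) auto
    finally show ?thesis .
  qed
  define A where "A = {t. t < m \<and> \<delta> t < q}"
  define B where "B p = {t. t < m \<and> \<delta> t < q \<and> J t = p}" for p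
  have Bcard: "card (B p) < 2^q" if p: "p \<in> {..<k} \<times> {..<k}" for p
  proof (cases "fst p < snd p")
    case False
    then have "B p = {}" using J unfolding B_def by force
    then show ?thesis by simp
  next
    case True
    obtain a b where ab: "p = (a, b)" by (cases p)
    have ablt: "a < b" "b < k" using True p ab by auto
    have "card (B p) < 2^(Suc (q - 1))"
    proof (rule count_pairs[OF bstT, where x = "\<lambda>t. a * m + t + 1" and y = "\<lambda>t. b * m + t + 1"])
      show "finite (B p)" unfolding B_def by simp
      show "a * m + t + 1 \<in> set_tree T \<and> b * m + t + 1 \<in> set_tree T" if "t \<in> B p" for t
      proof -
        have t: "t < m" using that unfolding B_def by simp
        have ia: "t*k + a < k*m" using idx_bound[of a k t m] ablt t by simp
        have ib: "t*k + b < k*m" using idx_bound[of b k t m] ablt t by simp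
        have "a * m + t + 1 \<in> {1..k*m}" using seqS_range[OF ia] seqS_idx[of a k t m] ablt t by simp
        moreover have "b * m + t + 1 \<in> {1..k*m}" using seqS_range[OF ib] seqS_idx[of b k t m] ablt t by simp
        ultimately show ?thesis using setT n_def by simp
      qed
      show "(a * m + s + 1 < a * m + t + 1) \<and> (b * m + s + 1 < b * m + t + 1)" if "s < t" for s t
        using that by simp
      show "a * m + s + 1 < b * m + t + 1" if "s \<in> B p" "t \<in> B p" for s t
        using sep_bound[OF ablt(1)] that unfolding B_def by simp
      show "dist_T T (a * m + t + 1) (b * m + t + 1) \<le> q - 1" if "t \<in> B p" for t
        using that ab unfolding B_def \<delta>_def J1_def J2_def by auto
    qed
    then show ?thesis using q by simp
  qed
  have Acard: "card A \<le> k * k * 2^q"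
  proof -
    have "A \<subseteq> (\<Union>p\<in>{..<k} \<times> {..<k}. B p)"
    proof
      fix t assume "t \<in> A"
      then have "t < m" "\<delta> t < q" unfolding A_def by auto
      moreover have "J t \<in> {..<k} \<times> {..<k}" using J[OF \<open>t < m\<close>] by (cases "J t") auto
      ultimately show "t \<in> (\<Union>p\<in>{..<k} \<times> {..<k}. B p)" unfolding B_def by blast
    qed
    then have "card A \<le> card (\<Union>p\<in>{..<k} \<times> {..<k}. B p)"
      by (intro card_mono) (auto simp: B_def)
    also have "\<dots> \<le> (\<Sum>p\<in>{..<k} \<times> {..<k}. card (B p))" by (rule card_UN_le) simp
    also have "\<dots> \<le> (\<Sum>p\<in>{..<k} \<times> {..<k}. 2^q)" by (rule sum_mono) (use Bcard in fastforce)
    also have "\<dots> = k * k * 2^q" by simp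
    finally show ?thesis .
  qed
  define C where "C = {t. t < m \<and> q \<le> \<delta> t}"
  have ACm: "card A + card C = m"
  proof -
    have "A \<union> C = {..<m}" "A \<inter> C = {}" unfolding A_def C_def by auto
    then show ?thesis using card_Un_disjoint[of A C] unfolding A_def C_def by (simp add: lessThan_def)
  qed
  have m2: "2 * (k * k * 2^q) \<le> m"
  proof -
    have "2 * 2^q \<le> (4::nat)^q"
    proof -
      have "(4::nat)^q = 2^q * 2^q" by (simp add: power_mult_distrib[symmetric])
      moreover have "2 \<le> (2::nat)^q" using q by (metis power_one_right power_increasing le_add2 nat_le_linear one_le_numeral)
      ultimately show ?thesis by simp
    qed
    then show ?thesis unfolding mdef by (simp add: power2_eq_square)
  qed
  have Cm: "m \<le> 2 * card C" using ACm Acard m2 by linarith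
  have sum2: "q * card C \<le> (\<Sum>t<m. \<delta> t)"
  proof -
    have "q * card C = (\<Sum>t\<in>C. q)" by simp
    also have "\<dots> \<le> (\<Sum>t\<in>C. \<delta> t)" by (rule sum_mono) (simp add: C_def)
    also have "\<dots> \<le> (\<Sum>t<m. \<delta> t)" by (rule sum_mono2) (auto simp: C_def)
    finally show ?thesis .
  qed
  have "q * m \<le> 2 * (\<Sum>t<m. \<delta> t)"
    using sum2 Cm mult_le_mono2[OF Cm, of q] by linarith
  then show ?thesis using cost sum1 unfolding S_def n_def by linarith
qed



lemma nat_Inf_bound:
  fixes X :: "nat set"
  assumes "X \<noteq> {}" "\<And>x. x \<in> X \<Longrightarrow> B \<le> 2 * x"
  shows "B \<le> 2 * Inf X"
  using assms Inf_nat_def1 by blast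

lemma mem_setI:
  assumes "P l f" shows "g l f \<in> {g l f | l f. P l f}"
  unfolding mem_Collect_eq by (rule exI[of _ l], rule exI[of _ f], simp add: assms)

lemma mem_setE: "y \<in> {g l f | l f. P l f} \<Longrightarrow> \<exists>l f. y = g l f \<and> P l f"
  unfolding mem_Collect_eq by assumption

lemma lower_finger:
  assumes k: "k \<ge> 2" and q: "q \<ge> 1" and mdef: "m = k^2 * 4^q"
  shows "2*(k*m) + q*m \<le> 2 * finger (k - 1) (k*m) (seqS k m)"
proof -
  define n where "n = k * m"
  have m1: "m \<ge> 1" unfolding mdef using k by simp
  have n1: "n \<ge> 1" unfolding n_def using k m1 by simp
  have "2*n + q*m \<le> 2 * finger (k - 1) n (seqS k m)"
    unfolding finger_def
  proof (rule nat_Inf_bound)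
    show "{finger_T (k - 1) n T (seqS k m) |T. bst_on n T} \<noteq> {}"
      using inorder_rchain[of 1 n] unfolding bst_on_def by auto
    fix x assume "x \<in> {finger_T (k - 1) n T (seqS k m) |T. bst_on n T}"
    then obtain T where T: "bst_on n T" and x: "x = finger_T (k - 1) n T (seqS k m)" by blast
    show "2*n + q*m \<le> 2 * x"
      unfolding x finger_T_def
    proof (rule nat_Inf_bound)
      have c1: "\<forall>i<k - 1. (\<lambda>_. 1::nat) i \<in> {1..n}" using n1 by simp
      have c2: "length (replicate n (0::nat)) = length (seqS k m)" unfolding n_def by simp
      have c3: "set (replicate n (0::nat)) \<subseteq> {..<k - 1}" using k by (simp add: set_replicate_conv_if)
      show "{finger_cost T l (seqS k m) f |l f. (\<forall>i<k - 1. l i \<in> {1..n}) \<and>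
          length f = length (seqS k m) \<and> set f \<subseteq> {..<k - 1}} \<noteq> {}"
      proof -
        have mem: "finger_cost T (\<lambda>_. 1) (seqS k m) (replicate n 0) \<in> {finger_cost T l (seqS k m) f |l f. (\<forall>i<k - 1. l i \<in> {1..n}) \<and>
          length f = length (seqS k m) \<and> set f \<subseteq> {..<k - 1}}"
          by (rule mem_setI[where g = "\<lambda>l f. finger_cost T l (seqS k m) f"]) (intro conjI c1 c2 c3)
        show ?thesis using mem equals0D by metis
      qed
      fix y assume "y \<in> {finger_cost T l (seqS k m) f |l f. (\<forall>i<k - 1. l i \<in> {1..n}) \<and>
          length f = length (seqS k m) \<and> set f \<subseteq> {..<k - 1}}"
      from mem_setE[OF this] obtain l f where y: "y = finger_cost T l (seqS k m) f" and lf: "length f = length (seqS k m)"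
        and sf: "set f \<subseteq> {..<k - 1}" by blast
      show "2*n + q*m \<le> 2 * y"
        unfolding y n_def using lower_cost[OF k q mdef _ _ sf] T lf n_def by simp
    qed
  qed
  then show ?thesis unfolding n_def .
qed

lemma log2_lt: "k \<ge> 1 \<Longrightarrow> log 2 (real k) < real k"
proof -
  assume "k \<ge> 1"
  then have h: "0 < k" by simp
  show ?thesis using log2_of_power_less[OF less_exp h] .
qed

lemma real_bound:
  assumes k: "k \<ge> 2" and q: "q \<ge> 1" and mdef: "m = k^2 * 4^q"
    and F: "2*(k*m) + q*m \<le> 2 * F"
  shows "real F \<ge> (1/8) * (real (k*m) / real k) * lg (real (k*m) / real k)"
proof -
  have kpos: "real k > 0" using k by simp
  have e1: "real (k*m) / real k = real m" using kpos by simp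
  have m2: "real m \<ge> 2"
  proof -
    have "k^2 * 4^q \<ge> (1::nat) * 4" using k q
      by (intro mult_mono) (auto simp: power_increasing[of 1 q 4, simplified] one_le_power)
    then show ?thesis unfolding mdef by linarith
  qed
  have lgm: "lg (real m) = 2 * log 2 (real k) + 2 * real q"
  proof -
    have "lg (real m) = log 2 (real m)" unfolding lg_def using m2 by simp
    also have "real m = real k ^ 2 * 4 ^ q" unfolding mdef by simp
    also have "log 2 (real k ^ 2 * 4 ^ q) = log 2 (real k ^ 2) + log 2 (4 ^ q)"
      using kpos by (simp add: log_mult)
    also have "log 2 (real k ^ 2) = 2 * log 2 (real k)" using kpos by (simp add: log_nat_power)
    also have "log 2 ((4::real) ^ q) = real q * log 2 4" by (simp add: log_nat_power)
    also have "log 2 (4::real) = 2"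
    proof -
      have "log 2 ((2::real) ^ 2) = real 2 * log 2 2" by (rule log_nat_power) simp
      then show ?thesis by simp
    qed
    finally show ?thesis unfolding mdef by (simp add: algebra_simps)
  qed
  have lk: "log 2 (real k) < real k" using log2_lt k by simp
  have "(1/8) * real m * (2 * log 2 (real k) + 2 * real q)
        = real m * log 2 (real k) / 4 + real m * real q / 4" by (simp add: algebra_simps)
  also have "\<dots> \<le> real m * real k + real m * real q / 2"
  proof -
    have "real m * log 2 (real k) \<le> real m * real k" using lk m2 by (intro mult_left_mono) auto
    moreover have "real m * real k \<ge> 0" by simp
    moreover have "real m * real q \<ge> 0" by simp
    ultimately show ?thesis by linarith
  qed
  also have "\<dots> \<le> real F"
  proof -
    have "real (2*(k*m) + q*m) \<le> real (2 * F)" using F by (simp only: of_nat_le_iff)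
    then show ?thesis by (simp add: algebra_simps)
  qed
  finally show ?thesis unfolding e1 lgm by (simp add: algebra_simps)
qed



lemma seqS_kmono:
  assumes k: "k \<ge> 1"
  shows "k_monotone k (seqS k m)"
proof -
  have c1: "\<forall>t<length (seqS k m). t mod k < k" using k by simp
  have c2: "\<forall>t s. t < s \<and> s < length (seqS k m) \<and> t mod k = s mod k \<longrightarrow> seqS k m ! t < seqS k m ! s"
  proof (intro allI impI)
    fix t s assume a: "t < s \<and> s < length (seqS k m) \<and> t mod k = s mod k"
    have "t div k < s div k"
    proof (rule ccontr)
      assume "\<not> t div k < s div k"
      then have "s div k \<le> t div k" by simp
      then have p: "s div k * k \<le> t div k * k" by (rule mult_le_mono1)
      have e1: "s div k * k + s mod k = s" by (rule div_mult_mod_eq)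
      have e2: "t div k * k + t mod k = t" by (rule div_mult_mod_eq)
      have "s \<le> t" using p e1 e2 a by linarith
      then show False using a by simp
    qed
    then show "seqS k m ! t < seqS k m ! s" using a by (simp add: seqS_nth)
  qed
  show ?thesis unfolding k_monotone_def
    by (rule exI[of _ "\<lambda>t. t mod k"]) (intro conjI disjI1 c1 c2)
qed

theorem theorem12:
  shows "\<exists>c C :: real. c > 0 \<and> C > 0 \<and>
    (\<forall>k::nat. k \<ge> 2 \<longrightarrow>
      infinite {n::nat. \<exists>S :: nat list. length S = n \<and> set S \<subseteq> {1..n} \<and> k_monotone k S \<and>
         real (finger (k - 1) n S) \<ge> c * (real n / real k) * lg (real n / real k) \<and>
         real (finger k n S) \<le> C * real n})"
proof -
  have main: "\<forall>k::nat. k \<ge> 2 \<longrightarrow>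
      infinite {n::nat. \<exists>S :: nat list. length S = n \<and> set S \<subseteq> {1..n} \<and> k_monotone k S \<and>
         real (finger (k - 1) n S) \<ge> (1/8::real) * (real n / real k) * lg (real n / real k) \<and>
         real (finger k n S) \<le> (2::real) * real n}"
  proof (intro allI impI)
  fix k :: nat assume k: "k \<ge> 2"
  define N where "N q = k * (k^2 * 4^(Suc q))" for q
  have inj: "inj N"
  proof (rule injI)
    fix a b assume "N a = N b"
    then have "(4::nat)^(Suc a) = 4^(Suc b)" unfolding N_def using k by simp
    then show "a = b" by simp
  qed
  have sub: "range N \<subseteq> {n::nat. \<exists>S :: nat list. length S = n \<and> set S \<subseteq> {1..n} \<and> k_monotone k S \<and>
         real (finger (k - 1) n S) \<ge> 1/8 * (real n / real k) * lg (real n / real k) \<and>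
         real (finger k n S) \<le> 2 * real n}"
  proof
    fix n assume "n \<in> range N"
    then obtain q where nq: "n = N q" by blast
    define m where "m = k^2 * 4^(Suc q)"
    have n: "n = k * m" unfolding nq N_def m_def by simp
    have q1: "Suc q \<ge> 1" by simp
    have m1: "m \<ge> 1" unfolding m_def using k by simp
    define S where "S = seqS k m"
    have "length S = n" unfolding S_def n by simp
    moreover have "set S \<subseteq> {1..n}"
    proof
      fix x assume "x \<in> set S"
      then obtain i where "i < length S" "x = S ! i" by (auto simp: in_set_conv_nth)
      then show "x \<in> {1..n}" using seqS_range[of i k m] unfolding S_def n by simp
    qed
    moreover have "k_monotone k S" unfolding S_def using k by (intro seqS_kmono) simp
    moreover have "real (finger (k - 1) n S) \<ge> 1/8 * (real n / real k) * lg (real n / real k)"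
      unfolding n S_def
      by (rule real_bound[OF k q1 m_def lower_finger[OF k q1 m_def]])
    moreover have "real (finger k n S) \<le> 2 * real n"
    proof -
      have "finger k n S \<le> 2 * n" unfolding n S_def using upper[of k m] k m1 by simp
      then show ?thesis by linarith
    qed
    ultimately show "n \<in> {n::nat. \<exists>S :: nat list. length S = n \<and> set S \<subseteq> {1..n} \<and> k_monotone k S \<and>
         real (finger (k - 1) n S) \<ge> 1/8 * (real n / real k) * lg (real n / real k) \<and>
         real (finger k n S) \<le> 2 * real n}"
      unfolding mem_Collect_eq by (intro exI[of _ S] conjI)
  qed
  show "infinite {n::nat. \<exists>S :: nat list. length S = n \<and> set S \<subseteq> {1..n} \<and> k_monotone k S \<and>
         real (finger (k - 1) n S) \<ge> 1/8 * (real n / real k) * lg (real n / real k) \<and>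
         real (finger k n S) \<le> 2 * real n}"
  proof -
    have "infinite (range N)"
    proof
      assume "finite (range N)"
      then have "finite (UNIV::nat set)" using finite_imageD inj by blast
      then show False by simp
    qed
    then show ?thesis using infinite_super[OF sub] by blast
  qed
  qed
  show ?thesis
    apply (rule exI[of _ "1/8::real"])
    apply (rule exI[of _ "2::real"])
    apply (intro conjI)
      apply simp
     apply simp
    by (rule main)
qed

end
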